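(* Let $T>0$, $\sigma:(0,\infty)^d\to\mathbb R^{d\times d}$, $\mathcal L:=\tfrac12\mathrm{Tr}(\sigma\sigma'\nabla^2)$, $b:(0,\infty)^d\to\mathbb R_+$ bounded continuous and $\mu>0$. Let $\Psi:(0,\infty)^d\to(0,\infty)$ be a strictly positive $C^2$ function and $\lambda>0$, $c$ constants such that: $\mathcal L\Psi(x)\le\lambda(1+\Psi(x))$ for $x\in(0,\infty)^d$; $\Psi(x)\to\infty$ as $x\to\bar x$ for every $\bar x\in\mathcal O$; for every $M>0$ there is $R$ with $\Psi(x)/\underline x\ge M$ whenever $\underline x\ge R$; and $c\Psi(x)\ge b(x)|\nabla\Psi(x)\sigma(x)|$ for all $x\in(0,\infty)^d$. Then for sufficiently large $L$, the function $\Phi(t,x):=e^{L(T-t)}\Psi(x)$ satisfies $-\partial_t\Phi-\mathcal L\Phi-\mu\Phi-b|\nabla\Phi\,\sigma|>0$ in $[0,T]\times(0,\infty)^d$.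
   Context: $\underline x=\sum_ix^i$; $\mathcal O=\{x\in\mathbb R_+^d:x^i=0\text{ for some }i\}$; $\nabla\Phi$ is the spatial gradient (a row vector) so $\nabla\Phi\,\sigma\in\mathbb R^d$. *)

theory Defs
  imports "HOL-Analysis.Analysis"
begin

definition pos_orthant :: "(real^'n) set" where
  "pos_orthant = {x. \<forall>i. x $ i > 0}"

definition bdry_O :: "(real^'n) set" where
  "bdry_O = {x. (\<forall>i. x $ i \<ge> 0) \<and> (\<exists>i. x $ i = 0)}"

definition partial :: "(real^'n \<Rightarrow> real) \<Rightarrow> real^'n \<Rightarrow> 'n \<Rightarrow> real" where
  "partial f x i = deriv (\<lambda>s. f (x + s *\<^sub>R axis i 1)) 0"

definition grad :: "(real^'n \<Rightarrow> real) \<Rightarrow> real^'n \<Rightarrow> real^'n" where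
  "grad f x = (\<chi> i. partial f x i)"

definition hess :: "(real^'n \<Rightarrow> real) \<Rightarrow> real^'n \<Rightarrow> real^'n^'n" where
  "hess f x = (\<chi> i j. partial (\<lambda>y. partial f y j) x i)"

definition C2_on :: "(real^'n) set \<Rightarrow> (real^'n \<Rightarrow> real) \<Rightarrow> bool" where
  "C2_on S f \<longleftrightarrow>
     (\<forall>x\<in>S. (f has_derivative (\<lambda>h. grad f x \<bullet> h)) (at x)) \<and>
     (\<forall>x\<in>S. (grad f has_derivative (\<lambda>h. transpose (hess f x) *v h)) (at x)) \<and>
     continuous_on S (hess f)"

definition gen_L :: "(real^'n \<Rightarrow> real^'n^'n) \<Rightarrow> (real^'n \<Rightarrow> real) \<Rightarrow> real^'n \<Rightarrow> real" where
  "gen_L \<sigma> f x = 1/2 * trace (\<sigma> x ** transpose (\<sigma> x) ** hess f x)"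

end

theory Submission
  imports Defs
begin


lemma open_pos: "open (pos_orthant :: (real^'n) set)"
proof -
  have "pos_orthant = (\<Inter>i\<in>UNIV. {x::real^'n. 0 < x $ i})"
    unfolding pos_orthant_def by auto
  moreover have "open {x::real^'n. 0 < x $ i}" for i
    by (rule open_Collect_less) (auto intro: continuous_intros)
  moreover have "open (\<Inter>i\<in>UNIV. {x::real^'n. 0 < x $ i})"
    using \<open>\<And>i. open {x::real^'n. 0 < x $ i}\<close> by (intro open_INT) auto
  ultimately show ?thesis by simp
qed

lemma deriv_scale_ev:
  fixes f g :: "real \<Rightarrow> real"
  assumes "eventually (\<lambda>s. g s = k * f s) (nhds 0)" "f field_differentiable at 0"
  shows "deriv g 0 = k * deriv f 0"
proof -
  have "(f has_field_derivative deriv f 0) (at 0)"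
    using assms(2) DERIV_deriv_iff_field_differentiable by blast
  then have "((\<lambda>s. k * f s) has_field_derivative k * deriv f 0) (at 0)"
    by (rule DERIV_cmult)
  then have "(g has_field_derivative k * deriv f 0) (at 0)"
    using DERIV_cong_ev[OF refl assms(1) refl] by blast
  then show ?thesis by (rule DERIV_imp_deriv)
qed

lemma line_ev:
  fixes x :: "real^'n"
  assumes "x \<in> pos_orthant"
  shows "eventually (\<lambda>s::real. x + s *\<^sub>R axis i 1 \<in> pos_orthant) (nhds 0)"
proof -
  obtain e where e: "e > 0" "ball x e \<subseteq> pos_orthant"
    using open_pos assms open_contains_ball by blast
  have "x + s *\<^sub>R axis i 1 \<in> pos_orthant" if "dist s 0 < e" for s :: real
  proof -
    have "dist x (x + s *\<^sub>R axis i 1) < e"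
      using that by (simp add: dist_norm)
    then show ?thesis using e by auto
  qed
  then show ?thesis unfolding eventually_nhds_metric using e by blast
qed

lemma line_diff:
  fixes f :: "real^'n \<Rightarrow> real"
  assumes "(f has_derivative D) (at y)"
  shows "(\<lambda>s::real. f (y + s *\<^sub>R axis j 1)) field_differentiable at 0"
proof -
  have "((\<lambda>s::real. y + s *\<^sub>R axis j 1) has_derivative (\<lambda>h. h *\<^sub>R axis j 1)) (at 0)"
    by (auto intro!: derivative_eq_intros)
  moreover have "(f has_derivative D) (at (y + 0 *\<^sub>R axis j 1))" using assms by simp
  ultimately have "((\<lambda>s. f (y + s *\<^sub>R axis j 1)) has_derivative (\<lambda>h. D (h *\<^sub>R axis j 1))) (at 0)"
    using has_derivative_compose[of "\<lambda>s::real. y + s *\<^sub>R axis j 1" "\<lambda>h. h *\<^sub>R axis j 1" 0 UNIV f D] by simp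
  then show ?thesis
    by (metis differentiableI field_differentiable_def differentiable_def real_differentiable_def)
qed


lemma psi_lower:
  fixes \<Psi> :: "real^'n \<Rightarrow> real"
  assumes Psi_pos: "\<forall>x\<in>pos_orthant. \<Psi> x > 0"
    and cont: "continuous_on pos_orthant \<Psi>"
    and blowup: "\<forall>xb\<in>bdry_O. filterlim \<Psi> at_top (at xb within pos_orthant)"
    and growth: "\<forall>M>0. \<exists>R. \<forall>x\<in>pos_orthant. (\<Sum>i\<in>UNIV. x $ i) \<ge> R \<longrightarrow>
                   \<Psi> x / (\<Sum>i\<in>UNIV. x $ i) \<ge> M"
  shows "\<exists>m>0. \<forall>x\<in>pos_orthant. \<Psi> x \<ge> m"
proof -
  obtain R0 where R0: "\<forall>x\<in>pos_orthant. (\<Sum>i\<in>UNIV. x $ i) \<ge> R0 \<longrightarrow>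
                   \<Psi> x / (\<Sum>i\<in>UNIV. x $ i) \<ge> 1" using growth by force
  define R where "R = max R0 1"
  define K where "K = {x\<in>pos_orthant. (\<Sum>i\<in>UNIV. x $ i) \<le> R \<and> \<Psi> x \<le> 1}"
  have outside: "\<Psi> x \<ge> 1" if "x \<in> pos_orthant" "x \<notin> K" for x
  proof (cases "(\<Sum>i\<in>UNIV. x $ i) \<le> R")
    case True then show ?thesis using that K_def by auto
  next
    case False
    then have s: "(\<Sum>i\<in>UNIV. x $ i) \<ge> R0" "(\<Sum>i\<in>UNIV. x $ i) \<ge> 1" unfolding R_def by auto
    then have "\<Psi> x / (\<Sum>i\<in>UNIV. x $ i) \<ge> 1" using R0 that by auto
    then have "\<Psi> x \<ge> (\<Sum>i\<in>UNIV. x $ i)" using s by (simp add: le_divide_eq)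
    then show ?thesis using s by linarith
  qed
  have Kpos: "\<And>x. x \<in> K \<Longrightarrow> x \<in> pos_orthant" unfolding K_def by auto
  have "closed K"
    unfolding closed_sequential_limits
  proof (intro allI impI, elim conjE)
    fix X :: "nat \<Rightarrow> real^'n" and l
    assume XK: "\<forall>n. X n \<in> K" and Xl: "X \<longlonglongrightarrow> l"
    have comp: "(\<lambda>n. X n $ i) \<longlonglongrightarrow> l $ i" for i using Xl by (rule tendsto_vec_nth)
    have nonneg: "l $ i \<ge> 0" for i
      by (rule LIMSEQ_le_const[OF comp]) (use XK Kpos in \<open>auto simp: pos_orthant_def less_imp_le\<close>)
    have "(\<lambda>n. \<Sum>i\<in>UNIV. X n $ i) \<longlonglongrightarrow> (\<Sum>i\<in>UNIV. l $ i)"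
      by (intro tendsto_sum comp)
    then have sumR: "(\<Sum>i\<in>UNIV. l $ i) \<le> R"
      by (rule LIMSEQ_le_const2) (use XK K_def in auto)
    show "l \<in> K"
    proof (cases "l \<in> pos_orthant")
      case True
      have "isCont \<Psi> l" using cont True open_pos continuous_on_eq_continuous_at by blast
      then have "(\<lambda>n. \<Psi> (X n)) \<longlonglongrightarrow> \<Psi> l" using Xl by (rule isCont_tendsto_compose)
      then have "\<Psi> l \<le> 1" by (rule LIMSEQ_le_const2) (use XK K_def in auto)
      then show ?thesis using True sumR K_def by auto
    next
      case False
      then have "l \<in> bdry_O" using nonneg unfolding pos_orthant_def bdry_O_def
        by (auto simp: not_less intro: antisym)
      then have lim: "filterlim \<Psi> at_top (at l within pos_orthant)" using blowup by auto
      have "filterlim X (at l within pos_orthant) sequentially"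
        unfolding filterlim_at using Xl XK Kpos False by (auto intro!: always_eventually)
      then have "filterlim (\<lambda>n. \<Psi> (X n)) at_top sequentially"
        using filterlim_compose[OF lim] by blast
      then have "eventually (\<lambda>n. \<Psi> (X n) \<ge> 2) sequentially"
        by (simp add: filterlim_at_top)
      then obtain n where "\<Psi> (X n) \<ge> 2" by (meson eventually_sequentially order_refl)
      moreover have "\<Psi> (X n) \<le> 1" using XK K_def by auto
      ultimately show ?thesis by simp
    qed
  qed
  moreover have "bounded K"
  proof -
    have "K \<subseteq> cbox 0 (\<chi> i. R)"
    proof
      fix x assume xK: "x \<in> K"
      have "x $ i \<le> R" for i
      proof -
        have "x $ i \<le> (\<Sum>j\<in>UNIV. x $ j)"
          by (rule member_le_sum) (use xK Kpos in \<open>auto simp: pos_orthant_def less_imp_le\<close>)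
        then show ?thesis using xK K_def by auto
      qed
      then show "x \<in> cbox 0 (\<chi> i. R)" using xK Kpos
        by (auto simp: mem_box_cart pos_orthant_def less_imp_le)
    qed
    then show ?thesis using bounded_cbox bounded_subset by blast
  qed
  ultimately have cK: "compact K" using compact_eq_bounded_closed by blast
  show ?thesis
  proof (cases "K = {}")
    case True
    then show ?thesis using outside by (intro exI[of _ 1]) auto
  next
    case False
    have "continuous_on K \<Psi>" using cont Kpos continuous_on_subset by blast
    then obtain x0 where x0: "x0 \<in> K" "\<forall>y\<in>K. \<Psi> x0 \<le> \<Psi> y"
      using continuous_attains_inf[OF cK False] by blast
    have "\<Psi> x0 > 0" using x0 Kpos Psi_pos by auto
    then show ?thesis using x0 outside
      by (intro exI[of _ "min 1 (\<Psi> x0)"]) (auto simp: min_le_iff_disj)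
  qed
qed


lemma partial_scale:
  fixes \<Psi> :: "real^'n \<Rightarrow> real"
  assumes "(\<Psi> has_derivative D) (at y)"
  shows "partial (\<lambda>z. k * \<Psi> z) y j = k * partial \<Psi> y j"
  unfolding partial_def
  by (rule deriv_scale_ev) (auto intro: line_diff[OF assms])

lemma grad_scale:
  fixes \<Psi> :: "real^'n \<Rightarrow> real"
  assumes "(\<Psi> has_derivative D) (at y)"
  shows "grad (\<lambda>z. k * \<Psi> z) y = k *\<^sub>R grad \<Psi> y"
  unfolding grad_def using partial_scale[OF assms] by (simp add: vec_eq_iff)

lemma hess_scale:
  fixes \<Psi> :: "real^'n \<Rightarrow> real"
  assumes C2: "C2_on pos_orthant \<Psi>" and x: "x \<in> pos_orthant"
  shows "hess (\<lambda>z. k * \<Psi> z) x = k *\<^sub>R hess \<Psi> x"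
proof -
  have ent: "partial (\<lambda>y. partial (\<lambda>z. k * \<Psi> z) y j) x i = k * partial (\<lambda>y. partial \<Psi> y j) x i" for i j
    unfolding partial_def[of "\<lambda>y. partial (\<lambda>z. k * \<Psi> z) y j"] partial_def[of "\<lambda>y. partial \<Psi> y j"]
  proof (rule deriv_scale_ev)
    show "\<forall>\<^sub>F s in nhds 0. partial (\<lambda>z. k * \<Psi> z) (x + s *\<^sub>R axis i 1) j =
            k * partial \<Psi> (x + s *\<^sub>R axis i 1) j"
      using line_ev[OF x, of i] 
    proof (rule eventually_mono)
      fix s assume "x + s *\<^sub>R axis i 1 \<in> pos_orthant"
      then have "(\<Psi> has_derivative (\<lambda>h. grad \<Psi> (x + s *\<^sub>R axis i 1) \<bullet> h)) (at (x + s *\<^sub>R axis i 1))"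
        using C2 unfolding C2_on_def by blast
      then show "partial (\<lambda>z. k * \<Psi> z) (x + s *\<^sub>R axis i 1) j =
            k * partial \<Psi> (x + s *\<^sub>R axis i 1) j" by (rule partial_scale)
    qed
    have g: "(grad \<Psi> has_derivative (\<lambda>h. transpose (hess \<Psi> x) *v h)) (at x)"
      using C2 x unfolding C2_on_def by blast
    have "((\<lambda>y. grad \<Psi> y $ j) has_derivative (\<lambda>h. (transpose (hess \<Psi> x) *v h) $ j)) (at x)"
      using bounded_linear.has_derivative[OF bounded_linear_vec_nth g] .
    moreover have "(\<lambda>y. grad \<Psi> y $ j) = (\<lambda>y. partial \<Psi> y j)" by (simp add: grad_def)
    ultimately have "((\<lambda>y. partial \<Psi> y j) has_derivative (\<lambda>h. (transpose (hess \<Psi> x) *v h) $ j)) (at x)"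
      by simp
    then show "(\<lambda>s. partial \<Psi> (x + s *\<^sub>R axis i 1) j) field_differentiable at 0"
      by (rule line_diff)
  qed
  show ?thesis unfolding hess_def using ent by (simp add: vec_eq_iff)
qed

lemma trace_scale: "trace (A ** (k *\<^sub>R H)) = k * trace (A ** (H :: real^'n^'n))"
proof -
  have "A ** (k *\<^sub>R H) = k *\<^sub>R (A ** H)"
    by (simp add: matrix_matrix_mult_def vec_eq_iff sum_distrib_left mult.left_commute)
  then show ?thesis unfolding trace_def by (simp add: sum_distrib_left)
qed

lemma genL_scale:
  fixes \<Psi> :: "real^'n \<Rightarrow> real"
  assumes C2: "C2_on pos_orthant \<Psi>" and x: "x \<in> pos_orthant"
  shows "gen_L \<sigma> (\<lambda>z. k * \<Psi> z) x = k * gen_L \<sigma> \<Psi> x"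
  unfolding gen_L_def hess_scale[OF assms] trace_scale by simp


theorem lemma3p7:
  fixes T \<mu> lam c :: real
    and \<sigma> :: "real^'n \<Rightarrow> real^'n^'n"
    and b \<Psi> :: "real^'n \<Rightarrow> real"
  assumes T: "T > 0"
    and mu: "\<mu> > 0"
    and b_cont: "continuous_on pos_orthant b"
    and b_bdd: "bounded (b ` pos_orthant)"
    and b_nonneg: "\<forall>x\<in>pos_orthant. b x \<ge> 0"
    and Psi_pos: "\<forall>x\<in>pos_orthant. \<Psi> x > 0"
    and Psi_C2: "C2_on pos_orthant \<Psi>"
    and lam: "lam > 0"
    and Lyap: "\<forall>x\<in>pos_orthant. gen_L \<sigma> \<Psi> x \<le> lam * (1 + \<Psi> x)"
    and blowup: "\<forall>xb\<in>bdry_O. filterlim \<Psi> at_top (at xb within pos_orthant)"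
    and growth: "\<forall>M>0. \<exists>R. \<forall>x\<in>pos_orthant. (\<Sum>i\<in>UNIV. x $ i) \<ge> R \<longrightarrow>
                   \<Psi> x / (\<Sum>i\<in>UNIV. x $ i) \<ge> M"
    and grad_bd: "\<forall>x\<in>pos_orthant. c * \<Psi> x \<ge> b x * norm (grad \<Psi> x v* \<sigma> x)"
  shows "\<exists>L0. \<forall>L\<ge>L0. \<forall>t\<in>{0..T}. \<forall>x\<in>pos_orthant.
           (let \<Phi> = (\<lambda>s y. exp (L * (T - s)) * \<Psi> y) in
              - deriv (\<lambda>s. \<Phi> s x) t - gen_L \<sigma> (\<Phi> t) x - \<mu> * \<Phi> t x
              - b x * norm (grad (\<Phi> t) x v* \<sigma> x) > 0)"
  proof -
  have diffP: "(\<Psi> has_derivative (\<lambda>h. grad \<Psi> x \<bullet> h)) (at x)" if "x \<in> pos_orthant" for x :: "real^'n"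
    using Psi_C2 that unfolding C2_on_def by blast
  have cont: "continuous_on pos_orthant \<Psi>"
    using diffP has_derivative_continuous continuous_at_imp_continuous_on by blast
  obtain m where m: "m > 0" "\<forall>x\<in>pos_orthant. \<Psi> x \<ge> m"
    using psi_lower[OF Psi_pos cont blowup growth] by blast
  define L0 where "L0 = lam + \<mu> + \<bar>c\<bar> + (lam + 1) / m"
  show ?thesis
  proof (intro exI[of _ L0] allI impI ballI)
    fix L t and x :: "real^'n" assume L: "L \<ge> L0" and t: "t \<in> {0..T}" and x: "x \<in> pos_orthant"
    define E where "E = exp (L * (T - t))"
    have E: "E > 0" unfolding E_def by simp
    have "((\<lambda>s. exp (L * (T - s)) * \<Psi> x) has_field_derivative (exp (L * (T - t)) * (- L)) * \<Psi> x) (at t)"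
      by (auto intro!: derivative_eq_intros)
    then have d: "deriv (\<lambda>s. exp (L * (T - s)) * \<Psi> x) t = - L * E * \<Psi> x"
      unfolding E_def by (auto dest: DERIV_imp_deriv)
    have gL: "gen_L \<sigma> (\<lambda>y. E * \<Psi> y) x = E * gen_L \<sigma> \<Psi> x"
      by (rule genL_scale[OF Psi_C2 x])
    have gr: "norm (grad (\<lambda>y. E * \<Psi> y) x v* \<sigma> x) = E * norm (grad \<Psi> x v* \<sigma> x)"
      using grad_scale[OF diffP[OF x], of E] E by (simp add: scaleR_vector_matrix_assoc)
    have Px: "\<Psi> x \<ge> m" using m x by auto
    have bx: "b x * norm (grad \<Psi> x v* \<sigma> x) \<le> \<bar>c\<bar> * \<Psi> x"
      using grad_bd x Psi_pos by (smt (verit) mult_right_mono abs_ge_self)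
    have Ly: "gen_L \<sigma> \<Psi> x \<le> lam * (1 + \<Psi> x)" using Lyap x by auto
    have "(lam + 1) / m * \<Psi> x \<ge> (lam + 1) / m * m"
      using Px m lam by (intro mult_left_mono) auto
    then have q: "(lam + 1) / m * \<Psi> x \<ge> lam + 1" using m by simp
    have "(L - lam - \<mu> - \<bar>c\<bar>) * \<Psi> x \<ge> (lam + 1) / m * \<Psi> x"
      using L Psi_pos x unfolding L0_def by (intro mult_right_mono) auto
    then have inner: "L * \<Psi> x - gen_L \<sigma> \<Psi> x - \<mu> * \<Psi> x - b x * norm (grad \<Psi> x v* \<sigma> x) > 0"
      using q Ly bx by (simp add: algebra_simps)
    have "0 < E * (L * \<Psi> x - gen_L \<sigma> \<Psi> x - \<mu> * \<Psi> x - b x * norm (grad \<Psi> x v* \<sigma> x))"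
      using E inner by simp
    then show "let \<Phi> = (\<lambda>s y. exp (L * (T - s)) * \<Psi> y) in
              - deriv (\<lambda>s. \<Phi> s x) t - gen_L \<sigma> (\<Phi> t) x - \<mu> * \<Phi> t x
              - b x * norm (grad (\<Phi> t) x v* \<sigma> x) > 0"
      unfolding Let_def d using gL gr unfolding E_def[symmetric] by (simp add: algebra_simps)
  qed
qed

end
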